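(* Let $q$ be a prime power, $k\geq 1$, and let $f,f'$ be linear Latin hypercubes of order $q$ and dimension $k$. Suppose there is a function $R:\mathbb{F}_q^3\to\mathbb{F}_q$ such that for every rectangle $(a,b,c,d)$ both $f(a)=R(f(b),f(c),f(d))$ and $f'(a)=R(f'(b),f'(c),f'(d))$ hold, and suppose $f(x)=f'(x)$ for every $x=(x_1,\dots,x_k)\in\mathbb{F}_q^k$ having at most one nonzero coordinate. Then $f=f'$. (That is, a linear Latin hypercube is uniquely determined by its rectangle function and its values at the points with at most one nonzero coordinate.)
   Context: A Latin hypercube of order $q$ and dimension $k$ is a function $f:\mathbb{F}_q^k\to\mathbb{F}_q$ such that fixing any $k-1$ arguments gives a bijection in the remaining argument. It is linear if there are permutations $\alpha_0,\dots,\alpha_k$ of $\mathbb{F}_q$ with $\alpha_0(f(x_1,\dots,x_k))=\alpha_1(x_1)+\cdots+\alpha_k(x_k)$ for all $x$. For distinct $i,j$, a rectangle of directions $i$ and $j$ is a quadruple $(a,b,c,d)$ in $\mathbb{F}_q^k$ with $a_i=b_i$, $c_i=d_i$, $b_j=c_j$, $d_j=a_j$, and $a_l=b_l=c_l=d_l$ for $l\notin\{i,j\}$. For a linear Latin hypercube $f$ (with $k\ge 2$), the rectangle function $\mathrm{Rect}_f$ is the unique $R$ with $f(a)=R(f(b),f(c),f(d))$ for all rectangles. *)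

theory Defs
  imports Main
begin

text \<open>The finite field F_q is a type 'a of class finite field (its order is automatically
a prime power); coordinates are indexed by a finite type 'n with k = CARD('n) \<ge> 1.
Points of F_q^k are functions 'n \<Rightarrow> 'a.\<close>

definition latin_hypercube :: "(('n::finite \<Rightarrow> 'a::{finite,field}) \<Rightarrow> 'a) \<Rightarrow> bool" where
  "latin_hypercube f \<longleftrightarrow> (\<forall>i x. bij (\<lambda>t. f (x(i := t))))"

definition linear_latin_hypercube :: "(('n::finite \<Rightarrow> 'a::{finite,field}) \<Rightarrow> 'a) \<Rightarrow> bool" where
  "linear_latin_hypercube f \<longleftrightarrow> latin_hypercube f \<and>
     (\<exists>(\<alpha>0::'a \<Rightarrow> 'a) (\<alpha>::'n \<Rightarrow> 'a \<Rightarrow> 'a). bij \<alpha>0 \<and> (\<forall>i. bij (\<alpha> i)) \<and>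
        (\<forall>x. \<alpha>0 (f x) = (\<Sum>i\<in>UNIV. \<alpha> i (x i))))"

definition is_rectangle :: "'n \<Rightarrow> 'n \<Rightarrow> ('n \<Rightarrow> 'a) \<Rightarrow> ('n \<Rightarrow> 'a) \<Rightarrow> ('n \<Rightarrow> 'a) \<Rightarrow> ('n \<Rightarrow> 'a) \<Rightarrow> bool" where
  "is_rectangle i j a b c d \<longleftrightarrow> i \<noteq> j \<and>
     a i = b i \<and> c i = d i \<and> b j = c j \<and> d j = a j \<and>
     (\<forall>l. l \<noteq> i \<and> l \<noteq> j \<longrightarrow> a l = b l \<and> b l = c l \<and> c l = d l)"

end

theory Submission
  imports Defs
begin

theorem lemma2:
  fixes f f' :: "('n::finite \<Rightarrow> 'a::{finite,field}) \<Rightarrow> 'a"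
    and R :: "'a \<Rightarrow> 'a \<Rightarrow> 'a \<Rightarrow> 'a"
  assumes "linear_latin_hypercube f" and "linear_latin_hypercube f'"
    and "\<And>i j a b c d. is_rectangle i j a b c d \<Longrightarrow> f a = R (f b) (f c) (f d)"
    and "\<And>i j a b c d. is_rectangle i j a b c d \<Longrightarrow> f' a = R (f' b) (f' c) (f' d)"
    and "\<And>x. card {i. x i \<noteq> 0} \<le> 1 \<Longrightarrow> f x = f' x"
  shows "f = f'"
proof -
  have main: "\<And>x. card {i. x i \<noteq> 0} = n \<Longrightarrow> f x = f' x" for n
  proof (induction n rule: less_induct)
    case (less n x)
    show ?case
    proof (cases "n \<le> 1")
      case True thus ?thesis using less.prems assms(5) by auto
    next
      case False
      let ?S = "{i. x i \<noteq> 0}"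
      have "card ?S \<ge> 2" using False less.prems by auto
      then obtain i j where ij: "i \<in> ?S" "j \<in> ?S" "i \<noteq> j"
      proof -
        have "?S \<noteq> {}" using \<open>card ?S \<ge> 2\<close> by (metis card.empty not_numeral_le_zero)
        then obtain i where i: "i \<in> ?S" by blast
        have "card (?S - {i}) \<ge> 1" using \<open>card ?S \<ge> 2\<close> i by (simp add: card_Diff_singleton)
        then have "?S - {i} \<noteq> {}" by (metis card.empty not_one_le_zero)
        then obtain j where "j \<in> ?S - {i}" by blast
        thus ?thesis using i that by blast
      qed
      define b where "b = x(j := 0)"
      define c where "c = x(i := 0, j := 0)"
      define d where "d = x(i := 0)"
      have rect: "is_rectangle i j x b c d"
        unfolding is_rectangle_def b_def c_def d_def using ij by auto
      have sb: "{l. b l \<noteq> 0} = ?S - {j}" unfolding b_def by auto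
      have sc: "{l. c l \<noteq> 0} = ?S - {i,j}" unfolding c_def by auto
      have sd: "{l. d l \<noteq> 0} = ?S - {i}" unfolding d_def by auto
      have fin: "finite ?S" by simp
      have "card (?S - {j}) < n" using ij fin less.prems False by (simp add: card_Diff1_less)
      then have eb: "f b = f' b" using less.IH sb by auto
      have "card (?S - {i}) < n" using ij fin less.prems False by (simp add: card_Diff1_less)
      then have ed: "f d = f' d" using less.IH sd by auto
      have "card (?S - {i,j}) < n" using ij fin less.prems
      proof -
        have "?S - {i,j} \<subseteq> ?S - {i}" by blast
        hence "card (?S - {i,j}) \<le> card (?S - {i})" by (simp add: card_mono)
        thus ?thesis using \<open>card (?S - {i}) < n\<close> by simp
      qed
      then have ec: "f c = f' c" using less.IH sc by auto
      show ?thesis using assms(3)[OF rect] assms(4)[OF rect] eb ec ed by simp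
    qed
  qed
  show ?thesis using main by blast
qed

end
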